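(* Let $U\subset\mathbb{R}^u\times\mathbb{R}^s$ be a convex neighborhood of zero and let $f:U\to\mathbb{R}^u\times\mathbb{R}^s$ be a $C^1$ map with $f(0)=0$. Suppose that for $M>0$, $m\left[\frac{\partial f_{\mathrm x}}{\partial\mathrm x}(U)\right]-M\sup_{z\in U}\left\|\frac{\partial f_{\mathrm x}}{\partial\mathrm y}(z)\right\|\ge\xi$, $\sup_{z\in U}\left\{\left\|\frac{\partial f_{\mathrm y}}{\partial\mathrm y}(z)\right\|+\frac1M\left\|\frac{\partial f_{\mathrm y}}{\partial\mathrm x}(z)\right\|\right\}\le\mu$, and $\xi/\mu>1$. Then $f(J_u(0,M)\cap U)\subset\mathrm{int}\,J_u(0,M)\cup\{0\}$, where $J_u(0,M)=\{(\mathrm x,\mathrm y)\in\mathbb{R}^u\times\mathbb{R}^s:\|\mathrm y\|\le M\|\mathrm x\|\}$.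
   Context: Points of $\mathbb{R}^u\times\mathbb{R}^s$ are written $(\mathrm x,\mathrm y)$, $f=(f_{\mathrm x},f_{\mathrm y})$, norms Euclidean. For a linear map $A$, $m(A)=\max\{c:\|Av\|\ge c\|v\|\ \forall v\}$; for a set $\mathbf A$ of matrices, $m(\mathbf A)=\inf_{A\in\mathbf A}m(A)$. $[\partial f_{\mathrm x}/\partial\mathrm x(U)]$ is the interval enclosure: the set of matrices whose $(i,j)$ entry lies in $[\inf_{U}\partial f_{\mathrm x,i}/\partial\mathrm x_j,\sup_U\partial f_{\mathrm x,i}/\partial\mathrm x_j]$. *)

theory Defs
  imports "HOL-Analysis.Analysis"
begin

definition min_norm :: "real^'n^'m \<Rightarrow> real" where
  "min_norm A = Sup {c. \<forall>v. norm (A *v v) \<ge> c * norm v}"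

definition min_norm_set :: "(real^'n^'m) set \<Rightarrow> real" where
  "min_norm_set S = Inf (min_norm ` S)"

definition interval_enclosure :: "('a \<Rightarrow> real^'n^'m) \<Rightarrow> 'a set \<Rightarrow> (real^'n^'m) set" where
  "interval_enclosure D U =
     {A. \<forall>i j. (INF z\<in>U. ereal (D z $ i $ j)) \<le> ereal (A $ i $ j)
              \<and> ereal (A $ i $ j) \<le> (SUP z\<in>U. ereal (D z $ i $ j))}"

definition dxx :: "((real^'u) \<times> (real^'s) \<Rightarrow> (real^'u) \<times> (real^'s)) \<Rightarrow> real^'u \<Rightarrow> real^'u" where
  "dxx Df = (\<lambda>v. fst (Df (v, 0)))"
definition dxy :: "((real^'u) \<times> (real^'s) \<Rightarrow> (real^'u) \<times> (real^'s)) \<Rightarrow> real^'s \<Rightarrow> real^'u" where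
  "dxy Df = (\<lambda>w. fst (Df (0, w)))"
definition dyx :: "((real^'u) \<times> (real^'s) \<Rightarrow> (real^'u) \<times> (real^'s)) \<Rightarrow> real^'u \<Rightarrow> real^'s" where
  "dyx Df = (\<lambda>v. snd (Df (v, 0)))"
definition dyy :: "((real^'u) \<times> (real^'s) \<Rightarrow> (real^'u) \<times> (real^'s)) \<Rightarrow> real^'s \<Rightarrow> real^'s" where
  "dyy Df = (\<lambda>w. snd (Df (0, w)))"

definition cone_u :: "real \<Rightarrow> ((real^'u) \<times> (real^'s)) set" where
  "cone_u M = {(x, y). norm y \<le> M * norm x}"

end

theory Submission
  imports Defs
begin



lemma min_norm_le:
  fixes A :: "real^'n^'m"
  shows "min_norm A * norm v \<le> norm (A *v v)"
proof (cases "v = 0")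
  case True then show ?thesis by simp
next
  case False
  let ?C = "{c. \<forall>v. norm (A *v v) \<ge> c * norm v}"
  have "0 \<in> ?C" by simp
  moreover have "\<And>c. c \<in> ?C \<Longrightarrow> c \<le> norm (A *v v) / norm v"
    using False by (auto simp: field_simps)
  ultimately have "Sup ?C \<le> norm (A *v v) / norm v"
    by (metis (no_types, lifting) cSup_least empty_iff)
  then show ?thesis using False unfolding min_norm_def by (simp add: field_simps)
qed

lemma min_norm_nonneg:
  fixes A :: "real^'n^'m"
  shows "0 \<le> min_norm A"
proof -
  let ?C = "{c. \<forall>v. norm (A *v v) \<ge> c * norm v}"
  obtain k :: 'n where True by simp
  let ?v = "axis k (1::real)"
  have nz: "norm ?v = 1" by simp
  have "\<And>c. c \<in> ?C \<Longrightarrow> c \<le> norm (A *v ?v)"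
    using nz by (metis (mono_tags, lifting) mem_Collect_eq mult.right_neutral)
  then have hb: "bdd_above ?C" by (auto simp: bdd_above_def)
  have h0: "0 \<in> ?C" by simp
  show ?thesis unfolding min_norm_def using cSup_upper[OF h0 hb] .
qed

lemma min_norm_set_le:
  fixes S :: "(real^'n^'m) set"
  assumes "A \<in> S"
  shows "min_norm_set S \<le> min_norm A"
  unfolding min_norm_set_def
  by (rule cInf_lower) (use assms min_norm_nonneg in \<open>auto simp: bdd_below_def\<close>)



lemma integral_between_ereal:
  fixes g :: "real \<Rightarrow> real"
  assumes cont: "continuous_on {0..1} g"
    and b: "\<And>t. t \<in> {0..1} \<Longrightarrow> lo \<le> ereal (g t) \<and> ereal (g t) \<le> hi"
  shows "lo \<le> ereal (integral {0..1} g) \<and> ereal (integral {0..1} g) \<le> hi"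
proof -
  have cpt: "compact {0..(1::real)}" by simp
  have ne: "{0..(1::real)} \<noteq> {}" by simp
  obtain t0 where t0: "t0 \<in> {0..1}" "\<And>t. t \<in> {0..1} \<Longrightarrow> g t0 \<le> g t"
    using continuous_attains_inf[OF cpt ne cont] by blast
  obtain t1 where t1: "t1 \<in> {0..1}" "\<And>t. t \<in> {0..1} \<Longrightarrow> g t \<le> g t1"
    using continuous_attains_sup[OF cpt ne cont] by blast
  have ig: "g integrable_on {0..1}" using cont integrable_continuous_interval by blast
  have ic: "\<And>c. (\<lambda>_::real. c::real) integrable_on {0..1}"
    unfolding cbox_interval[symmetric] by (rule integrable_const)
  have l: "g t0 \<le> integral {0..1} g" using integral_le[OF ic ig, of "g t0"] t0 by auto
  have u: "integral {0..1} g \<le> g t1" using integral_le[OF ig ic, of "g t1"] t1 by auto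
  have "lo \<le> ereal (g t0)" using b t0 by blast
  also have "\<dots> \<le> ereal (integral {0..1} g)" using l by simp
  finally have 1: "lo \<le> ereal (integral {0..1} g)" .
  have "ereal (integral {0..1} g) \<le> ereal (g t1)" using u by simp
  also have "\<dots> \<le> hi" using b t1 by blast
  finally show ?thesis using 1 by blast
qed

lemma bl_dxx: "bounded_linear (dxx (blinfun_apply L))"
  unfolding dxx_def by (intro bounded_linear_intros)
lemma bl_dxy: "bounded_linear (dxy (blinfun_apply L))"
  unfolding dxy_def by (intro bounded_linear_intros)
lemma bl_dyx: "bounded_linear (dyx (blinfun_apply L))"
  unfolding dyx_def by (intro bounded_linear_intros)
lemma bl_dyy: "bounded_linear (dyy (blinfun_apply L))"
  unfolding dyy_def by (intro bounded_linear_intros)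
theorem theorem4p1:
  fixes U :: "((real^'u) \<times> (real^'s)) set"
    and f :: "(real^'u) \<times> (real^'s) \<Rightarrow> (real^'u) \<times> (real^'s)"
    and f' :: "(real^'u) \<times> (real^'s) \<Rightarrow> (((real^'u) \<times> (real^'s)) \<Rightarrow>\<^sub>L ((real^'u) \<times> (real^'s)))"
    and M \<xi> \<mu> :: real
  assumes "convex U" and "open U" and "0 \<in> U"
    and "\<And>z. z \<in> U \<Longrightarrow> (f has_derivative blinfun_apply (f' z)) (at z)"
    and "continuous_on U f'"
    and "f 0 = 0"
    and "M > 0"
    and "ereal (min_norm_set (interval_enclosure (\<lambda>z. matrix (dxx (blinfun_apply (f' z)))) U))
           - ereal M * (SUP z\<in>U. ereal (onorm (dxy (blinfun_apply (f' z))))) \<ge> ereal \<xi>"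
    and "(SUP z\<in>U. ereal (onorm (dyy (blinfun_apply (f' z)))
                         + onorm (dyx (blinfun_apply (f' z))) / M)) \<le> ereal \<mu>"
    and "\<xi> / \<mu> > 1"
  shows "f ` (cone_u M \<inter> U) \<subseteq> interior (cone_u M) \<union> {0}"
proof
  fix w assume "w \<in> f ` (cone_u M \<inter> U)"
  then obtain z where zc: "z \<in> cone_u M" and zU: "z \<in> U" and wz: "w = f z" by blast
  obtain x y where zxy: "z = (x,y)" by (cases z)
  have yx: "norm y \<le> M * norm x" using zc zxy by (simp add: cone_u_def)
  have Mpos: "M > 0" using assms(7) .
  define SE where "SE = (SUP z\<in>U. ereal (onorm (dxy (blinfun_apply (f' z)))))"
  have SE_ge: "\<And>w. w \<in> U \<Longrightarrow> ereal (onorm (dxy (blinfun_apply (f' w)))) \<le> SE"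
    unfolding SE_def by (rule SUP_upper)
  have on_nn: "\<And>L. 0 \<le> onorm (dxy (blinfun_apply L))" using onorm_pos_le bl_dxy by blast
  have SE0: "ereal 0 \<le> SE" using SE_ge[OF assms(3)] on_nn[of "f' 0"]
    by (meson ereal_less_eq(3) order_trans)
  define m where "m = min_norm_set (interval_enclosure (\<lambda>z. matrix (dxx (blinfun_apply (f' z)))) U)"
  have h8: "ereal m - ereal M * SE \<ge> ereal \<xi>" using assms(8) unfolding m_def SE_def .
  have SEfin: "SE \<noteq> \<infinity>"
  proof
    assume inf: "SE = \<infinity>"
    have "ereal m - ereal M * SE = -\<infinity>" using Mpos inf by simp
    then show False using h8 by simp
  qed
  obtain S where SS: "SE = ereal S" using SEfin SE0 by (cases SE) auto
  have S0: "0 \<le> S" using SE0 SS by simp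
  have mS: "m - M * S \<ge> \<xi>" using h8 SS by simp
  have onS: "\<And>w. w \<in> U \<Longrightarrow> onorm (dxy (blinfun_apply (f' w))) \<le> S" using SE_ge SS by simp
  have onmu: "onorm (dyy (blinfun_apply (f' w))) + onorm (dyx (blinfun_apply (f' w))) / M \<le> \<mu>"
    if wU: "w \<in> U" for w
  proof -
    have "ereal (onorm (dyy (blinfun_apply (f' w))) + onorm (dyx (blinfun_apply (f' w))) / M)
      \<le> (SUP z\<in>U. ereal (onorm (dyy (blinfun_apply (f' z)))
                         + onorm (dyx (blinfun_apply (f' z))) / M))"
      using wU by (rule SUP_upper)
    also have "\<dots> \<le> ereal \<mu>" using assms(9) .
    finally show ?thesis by simp
  qed
  have mu0: "0 \<le> \<mu>"
  proof -
    have "0 \<le> onorm (dyy (blinfun_apply (f' 0)))" using onorm_pos_le bl_dyy by blast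
    moreover have "0 \<le> onorm (dyx (blinfun_apply (f' 0))) / M" using onorm_pos_le[OF bl_dyx, of "f' 0"] Mpos by (simp add: divide_nonneg_pos)
    ultimately show ?thesis using onmu[OF assms(3)] by linarith
  qed
  have mupos: "\<mu> > 0" using mu0 assms(10) by (cases "\<mu> = 0") auto
  have ximu: "\<xi> > \<mu>" using assms(10) mupos by (simp add: field_simps)
  show "w \<in> interior (cone_u M) \<union> {0}"
  proof (cases "x = 0")
    case True
    then have "y = 0" using yx by simp
    then show ?thesis using True zxy wz assms(6) by (simp add: zero_prod_def)
  next
    case False
    then have nx: "norm x > 0" by simp
    define F where "F t = f' (t *\<^sub>R z)" for t
    have seg: "t *\<^sub>R z \<in> U" if t: "t \<in> {0..1}" for t
      using convexD[OF assms(1) assms(3) zU, of "1-t" t] t by simp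
    have contF: "continuous_on {0..1} F"
      unfolding F_def by (rule continuous_on_compose2[OF assms(5)]) (auto intro!: continuous_intros seg)
    have cF: "\<And>v. continuous_on {0..1} (\<lambda>t. blinfun_apply (F t) v)"
      using contF by (intro continuous_intros)
    have deriv: "((\<lambda>t. f (t *\<^sub>R z)) has_vector_derivative blinfun_apply (F t) z) (at t within {0..1})"
      if t: "t \<in> {0..1}" for t
    proof -
      have d1: "((\<lambda>t. t *\<^sub>R z) has_derivative (\<lambda>h. h *\<^sub>R z)) (at t within {0..1})"
        by (intro derivative_eq_intros) auto
      have d2: "(f has_derivative blinfun_apply (F t)) (at (t *\<^sub>R z) within (\<lambda>t. t *\<^sub>R z) ` {0..1})"
        unfolding F_def using assms(4)[OF seg[OF t]] by (rule has_derivative_at_withinI)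
      have "((\<lambda>t. f (t *\<^sub>R z)) has_derivative (\<lambda>h. blinfun_apply (F t) (h *\<^sub>R z))) (at t within {0..1})"
        using has_derivative_in_compose[OF d1 d2] .
      then show ?thesis unfolding has_vector_derivative_def by (simp add: blinfun.scaleR_right)
    qed
    have FTC: "((\<lambda>t. blinfun_apply (F t) z) has_integral f z) {0..1}"
      using fundamental_theorem_of_calculus[of 0 1 "\<lambda>t. f (t *\<^sub>R z)", OF _ deriv] assms(6) by simp
    define a where "a t = fst (blinfun_apply (F t) (x,0))" for t
    define b where "b t = fst (blinfun_apply (F t) (0,y))" for t
    have split: "blinfun_apply (F t) z = blinfun_apply (F t) (x,0) + blinfun_apply (F t) (0,y)" for t
    proof -
      have "z = (x,0) + (0,y)" using zxy by simp
      then show ?thesis by (metis blinfun.add_right)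
    qed
    have FTCx: "((\<lambda>t. a t + b t) has_integral fst (f z)) {0..1}"
      using has_integral_linear[OF FTC bounded_linear_fst] split by (simp add: o_def a_def b_def)
    have FTCy: "((\<lambda>t. snd (blinfun_apply (F t) z)) has_integral snd (f z)) {0..1}"
      using has_integral_linear[OF FTC bounded_linear_snd] by (simp add: o_def)
    have ia: "a integrable_on {0..1}" unfolding a_def
      by (intro integrable_continuous_interval continuous_intros cF)
    have ib: "b integrable_on {0..1}" unfolding b_def
      by (intro integrable_continuous_interval continuous_intros cF)
    have fx: "fst (f z) = integral {0..1} a + integral {0..1} b"
      using integral_unique[OF FTCx] integral_add[OF ia ib] by simp
    have bb: "norm (integral {0..1} b) \<le> S * norm y"
    proof -
      have hb: "(b has_integral integral {0..1} b) (cbox 0 1)"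
        using integrable_integral[OF ib] by (simp add: cbox_interval)
      have "norm (b t) \<le> S * norm y" if t: "t \<in> cbox 0 1" for t
      proof -
        have t': "t \<in> {0..1}" using t by (simp add: cbox_interval)
        have "b t = dxy (blinfun_apply (F t)) y" by (simp add: b_def dxy_def)
        then have "norm (b t) \<le> onorm (dxy (blinfun_apply (F t))) * norm y"
          using onorm[OF bl_dxy] by simp
        also have "\<dots> \<le> S * norm y"
          using onS[OF seg[OF t']] unfolding F_def by (intro mult_right_mono) auto
        finally show ?thesis .
      qed
      from has_integral_bound[OF _ hb this] S0 show ?thesis by simp
    qed
    define col where "col j t = fst (blinfun_apply (F t) (axis j 1, 0))" for j t
    define Ah :: "real^'u^'u" where "Ah = (\<chi> i j. integral {0..1} (\<lambda>t. col j t $ i))"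
    have acomp: "a t $ i = (\<Sum>j\<in>UNIV. col j t $ i * x $ j)" for t i
    proof -
      have "a t = dxx (blinfun_apply (F t)) x" by (simp add: a_def dxx_def)
      also have "\<dots> = matrix (dxx (blinfun_apply (F t))) *v x"
        by (rule matrix_works[OF linear_matrix_vector_mul_eq[THEN iffD2, OF bounded_linear.linear[OF bl_dxx]], symmetric])
      finally show ?thesis by (simp add: matrix_vector_mult_def matrix_def dxx_def col_def)
    qed
    have ccol: "\<And>j i. continuous_on {0..1} (\<lambda>t. col j t $ i)" unfolding col_def
      by (intro continuous_intros cF)
    have icol: "\<And>j i. (\<lambda>t. col j t $ i) integrable_on {0..1}"
      using ccol by (intro integrable_continuous_interval)
    have ia_eq: "integral {0..1} a = Ah *v x"
    proof (rule vec_eq_iff[THEN iffD2, rule_format])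
      fix i
      have "integral {0..1} a $ i = integral {0..1} (\<lambda>t. a t $ i)"
        using integral_component_eq_cart[OF ia] by simp
      also have "\<dots> = integral {0..1} (\<lambda>t. \<Sum>j\<in>UNIV. col j t $ i * x $ j)" by (simp add: acomp)
      also have "\<dots> = (\<Sum>j\<in>UNIV. integral {0..1} (\<lambda>t. col j t $ i * x $ j))"
        by (rule integral_sum) (auto intro: integrable_on_mult_left icol)
      also have "\<dots> = (\<Sum>j\<in>UNIV. integral {0..1} (\<lambda>t. col j t $ i) * x $ j)" by simp
      also have "\<dots> = (Ah *v x) $ i" by (simp add: Ah_def matrix_vector_mult_def)
      finally show "integral {0..1} a $ i = (Ah *v x) $ i" .
    qed
    let ?D = "\<lambda>w. matrix (dxx (blinfun_apply (f' w)))"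
    have AhE: "Ah \<in> interval_enclosure ?D U"
      unfolding interval_enclosure_def
    proof (intro CollectI allI)
      fix i j
      have pt: "(INF w\<in>U. ereal (?D w $ i $ j)) \<le> ereal (col j t $ i) \<and> ereal (col j t $ i) \<le> (SUP w\<in>U. ereal (?D w $ i $ j))"
        if t: "t \<in> {0..1}" for t
      proof -
        have eq: "col j t $ i = ?D (t *\<^sub>R z) $ i $ j" by (simp add: col_def F_def matrix_def dxx_def)
        show ?thesis unfolding eq using seg[OF t] by (auto intro: INF_lower SUP_upper)
      qed
      show "(INF w\<in>U. ereal (?D w $ i $ j)) \<le> ereal (Ah $ i $ j) \<and> ereal (Ah $ i $ j) \<le> (SUP w\<in>U. ereal (?D w $ i $ j))"
        using integral_between_ereal[OF ccol pt] by (simp add: Ah_def)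
    qed
    have mA: "m \<le> min_norm Ah" using min_norm_set_le[OF AhE] unfolding m_def .
    have mAx: "m * norm x \<le> norm (Ah *v x)"
      using min_norm_le[of Ah x] mult_right_mono[OF mA norm_ge_zero[of x]] by linarith
    have Sy: "S * norm y \<le> S * (M * norm x)" using mult_left_mono[OF yx S0] .
    have xi_x: "\<xi> * norm x \<le> (m - M * S) * norm x" using mS by (intro mult_right_mono) auto
    have fxb: "\<xi> * norm x \<le> norm (fst (f z))"
    proof -
      have "norm (fst (f z)) \<ge> norm (Ah *v x) - norm (integral {0..1} b)"
        unfolding fx ia_eq by (metis norm_diff_ineq norm_minus_cancel diff_minus_eq_add)
      then show ?thesis using mAx bb Sy xi_x by (simp add: algebra_simps)
    qed
    have fyb: "norm (snd (f z)) \<le> \<mu> * M * norm x"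
    proof -
      have hy: "((\<lambda>t. snd (blinfun_apply (F t) z)) has_integral snd (f z)) (cbox 0 1)"
        using FTCy by (simp add: cbox_interval)
      have "norm (snd (blinfun_apply (F t) z)) \<le> \<mu> * M * norm x" if t: "t \<in> cbox 0 1" for t
      proof -
        have t': "t \<in> {0..1}" using t by (simp add: cbox_interval)
        let ?L = "blinfun_apply (F t)"
        have "snd (?L z) = dyx ?L x + dyy ?L y" using split[of t] by (simp add: dyx_def dyy_def)
        then have "norm (snd (?L z)) \<le> norm (dyx ?L x) + norm (dyy ?L y)" by (simp add: norm_triangle_ineq)
        also have "\<dots> \<le> onorm (dyx ?L) * norm x + onorm (dyy ?L) * norm y"
          using onorm[OF bl_dyx] onorm[OF bl_dyy] by (intro add_mono)
        also have "\<dots> \<le> onorm (dyx ?L) * norm x + onorm (dyy ?L) * (M * norm x)"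
          using yx onorm_pos_le[OF bl_dyy] by (intro add_left_mono mult_left_mono)
        also have "\<dots> = M * norm x * (onorm (dyy ?L) + onorm (dyx ?L) / M)"
          using Mpos by (simp add: field_simps)
        also have "\<dots> \<le> M * norm x * \<mu>"
          using onmu[OF seg[OF t']] Mpos nx unfolding F_def by (intro mult_left_mono) auto
        finally show ?thesis by (simp add: algebra_simps)
      qed
      from has_integral_bound[OF _ hy this] mu0 Mpos show ?thesis by simp
    qed
    have "\<mu> * M * norm x < \<xi> * M * norm x" using ximu Mpos nx by simp
    also have "\<dots> \<le> M * norm (fst (f z))" using fxb Mpos by (simp add: algebra_simps)
    finally have lt: "norm (snd (f z)) < M * norm (fst (f z))" using fyb by linarith
    have op: "open {p :: (real^'u) \<times> (real^'s). norm (snd p) < M * norm (fst p)}"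
      by (intro open_Collect_less continuous_intros)
    have sub: "{p :: (real^'u) \<times> (real^'s). norm (snd p) < M * norm (fst p)} \<subseteq> cone_u M"
      by (auto simp: cone_u_def)
    have "f z \<in> interior (cone_u M)"
      using interior_maximal[OF sub op] lt by auto
    then show ?thesis using wz by simp
  qed
qed

end
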